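(* With $\alpha(m)=\frac12(m^2-m)$ and $\mathcal{A}:=\sum_{m\ge2}\frac1m\sum_{k=\alpha(m)}^{\beta(m)}\frac1k$, where $\beta(m)=\frac12(m^2+m)-1$, one has $$\mathcal{A}=\sum_{m\ge2}\frac{H_{\alpha(m+1)-1}}{m^2+m}=\frac{\gamma}{2}+\frac12\sum_{j\ge3}\frac{\psi(\alpha(j))}{\alpha(j)},$$ and all these series converge.
   Context: $H_n=\sum_{j=1}^n\frac1j$ is the $n$-th harmonic number ($H_0=0$), $\gamma$ is Euler's constant, and $\psi=\Gamma'/\Gamma$ is the digamma function. *)

theory Defs
  imports "HOL-Analysis.Analysis"
begin

definition alpha :: "nat \<Rightarrow> nat" where
  "alpha m = (m^2 - m) div 2"

definition beta :: "nat \<Rightarrow> nat" where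
  "beta m = (m^2 + m) div 2 - 1"

definition A_term :: "nat \<Rightarrow> real" where
  "A_term m = (1 / real m) * (\<Sum>k = alpha m..beta m. 1 / real k)"

definition calA :: real where
  "calA = (\<Sum>m. A_term (m + 2))"

end

theory Submission
  imports Defs "HOL-Real_Asymp.Real_Asymp" "HOL-Library.Landau_Symbols"
begin

lemma alpha_Suc: "alpha (Suc n) = (n^2 + n) div 2"
  unfolding alpha_def by (simp add: power2_eq_square)

lemma beta_eq: "beta m = alpha (Suc m) - 1"
  unfolding beta_def alpha_Suc by simp

lemma alpha_twice: "2 * alpha n = n * (n - 1)"
proof -
  have e: "n^2 - n = n * (n - 1)" by (simp add: power2_eq_square diff_mult_distrib2)
  have "even (n * (n - 1))" by (cases "even n") auto
  then show ?thesis unfolding alpha_def e by simp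
qed

lemma alpha_real: "real (alpha n) = real n * (real n - 1) / 2"
proof -
  have "real (2 * alpha n) = real (n * (n - 1))" by (subst alpha_twice) simp
  then show ?thesis by (cases n) (auto simp: field_simps)
qed

lemma alpha_le: "alpha n \<le> n^2"
  unfolding alpha_def by simp

lemma alpha_mono: "m \<le> n \<Longrightarrow> alpha m \<le> alpha n"
proof -
  assume "m \<le> n"
  then have "m * (m - 1) \<le> n * (n - 1)" by (intro mult_le_mono) auto
  then show ?thesis using alpha_twice[of m] alpha_twice[of n] by linarith
qed

lemma alpha_ge1: "m \<ge> 2 \<Longrightarrow> alpha m \<ge> 1"
proof -
  assume "m \<ge> 2"
  then have "real (alpha m) \<ge> 1" unfolding alpha_real
  proof -
    have "real m \<ge> 2" using \<open>m \<ge> 2\<close> by simp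
    then have "real m * (real m - 1) \<ge> 2 * 1" by (intro mult_mono) auto
    then show "real m * (real m - 1) / 2 \<ge> 1" by simp
  qed
  then show ?thesis by simp
qed

lemma sum_harm_aux: "(\<Sum>k = Suc a..a + d. 1 / real k) = harm (a + d) - harm a"
proof (induction d)
  case 0
  then show ?case by simp
next
  case (Suc d)
  have "(\<Sum>k = Suc a..a + Suc d. 1 / real k) = (\<Sum>k = Suc a..a + d. 1 / real k) + 1 / real (Suc (a + d))"
    by (simp add: sum.cl_ivl_Suc)
  then show ?case using Suc by (simp add: harm_Suc inverse_eq_divide)
qed

lemma sum_harm: "1 \<le> a \<Longrightarrow> a \<le> b + 1 \<Longrightarrow> (\<Sum>k = a..b. 1 / real k) = harm b - harm (a - 1)"
proof -
  assume "1 \<le> a" "a \<le> b + 1"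
  define a' where "a' = a - 1"
  define d where "d = b - a'"
  have "a = Suc a'" "b = a' + d" unfolding a'_def d_def using \<open>1 \<le> a\<close> \<open>a \<le> b + 1\<close> by linarith+
  then show ?thesis using sum_harm_aux[of a' d] by simp
qed

definition aa :: "nat \<Rightarrow> real" where "aa n = harm (alpha n - 1)"

lemma A_term_eq: "m \<ge> 2 \<Longrightarrow> A_term m = (aa (Suc m) - aa m) / real m"
proof -
  assume m: "m \<ge> 2"
  have "(\<Sum>k = alpha m..beta m. 1 / real k) = harm (beta m) - harm (alpha m - 1)"
    using alpha_ge1[OF m] alpha_mono[of m "Suc m"] unfolding beta_eq
    by (intro sum_harm) auto
  then show ?thesis unfolding A_term_def aa_def beta_eq by simp
qed

lemma harm_upper: "harm n \<le> 1 + ln (real n + 1)"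
proof (cases "n = 0")
  case True then show ?thesis by (simp add: harm_def)
next
  case False
  have "harm n - ln (real n) \<le> harm 1 - ln (real (1::nat))"
    using False by (intro euler_mascheroni_sequence_decreasing) auto
  moreover have "ln (real n) \<le> ln (real n + 1)" using False by simp
  ultimately show ?thesis by (simp add: harm_def)
qed

lemma aa_bounds: "0 \<le> aa n" "aa n \<le> 1 + ln (real n ^ 2 + 1)"
proof -
  show "0 \<le> aa n" unfolding aa_def by (rule harm_nonneg)
  have "real (alpha n - 1) \<le> real n ^ 2"
    using alpha_le[of n] by (metis diff_le_self le_trans of_nat_le_iff of_nat_power)
  then have "ln (real (alpha n - 1) + 1) \<le> ln (real n ^ 2 + 1)"
    by (subst ln_le_cancel_iff) (auto intro: add_nonneg_pos)
  then show "aa n \<le> 1 + ln (real n ^ 2 + 1)" unfolding aa_def using harm_upper[of "alpha n - 1"] by simp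
qed

lemma aa_2: "aa 2 = 0"
  by (simp add: aa_def alpha_def harm_def)



lemma aa_lim: "(\<lambda>M. aa (M+2) / real (M+2)) \<longlonglongrightarrow> 0"
proof (rule tendsto_sandwich[of "\<lambda>_. 0" _ _ "\<lambda>M. (1 + ln (real (M+2)^2+1)) / real (M+2)"])
  show "eventually (\<lambda>M. 0 \<le> aa (M+2) / real (M+2)) sequentially" using aa_bounds by auto
  show "eventually (\<lambda>M. aa (M+2) / real (M+2) \<le> (1 + ln (real (M+2)^2+1)) / real (M+2)) sequentially"
  proof (intro always_eventually allI)
    fix M
    show "aa (M+2) / real (M+2) \<le> (1 + ln (real (M+2)^2+1)) / real (M+2)"
      by (rule divide_right_mono[OF aa_bounds(2)]) simp
  qed
  show "(\<lambda>_. 0) \<longlonglongrightarrow> (0::real)" by simp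
  show "(\<lambda>M. (1 + ln (real (M+2)^2+1)) / real (M+2)) \<longlonglongrightarrow> 0" by real_asymp
qed

lemma c_eq: "harm (alpha (M + 2 + 1) - 1) / (real (M + 2) ^ 2 + real (M + 2)) = aa (M+3) / ((real M + 2) * (real M + 3))"
  unfolding aa_def by (simp add: power2_eq_square algebra_simps numeral_3_eq_3)

lemma c_summ: "summable (\<lambda>m. harm (alpha (m + 2 + 1) - 1) / (real (m + 2) ^ 2 + real (m + 2)) :: real)"
proof (rule summable_comparison_test')
  let ?g = "\<lambda>m. (1 + ln (real (m+3)^2 + 1)) / ((real m + 2) * (real m + 3))"
  show "summable ?g"
  proof (rule summable_comparison_test_bigo)
    show "summable (\<lambda>n. norm (real n powr (-3/2)))"
      using summable_real_powr_iff[of "-3/2"] by simp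
    show "?g \<in> O(\<lambda>n. real n powr (-3/2))" by real_asymp
  qed
  fix n :: nat
  show "norm (harm (alpha (n + 2 + 1) - 1) / (real (n + 2) ^ 2 + real (n + 2))) \<le> ?g n"
    unfolding c_eq using aa_bounds[of "n+3"]
    by (auto intro!: divide_right_mono)
qed

lemma partial: "(\<Sum>m<M. A_term (m+2)) = (\<Sum>m<M. harm (alpha (m + 2 + 1) - 1) / (real (m + 2) ^ 2 + real (m + 2))) + aa (M+2) / real (M+2)"
proof (induction M)
  case 0
  then show ?case using aa_2 by (simp add: numeral_2_eq_2)
next
  case (Suc M)
  have A: "A_term (M+2) = (aa (M+3) - aa (M+2)) / (real M + 2)"
    using A_term_eq[of "M+2"] by (simp add: numeral_3_eq_3)
  define S where "S = (\<Sum>m<M. harm (alpha (m + 2 + 1) - 1) / (real (m + 2) ^ 2 + real (m + 2)))"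
  have "(\<Sum>m<Suc M. A_term (m+2)) = S + aa (M+2) / real (M+2) + (aa (M+3) - aa (M+2)) / (real M + 2)"
    unfolding sum.lessThan_Suc A Suc.IH S_def by simp
  also have "\<dots> = S + aa (M+3) / ((real M + 2) * (real M + 3)) + aa (M+3) / (real M + 3)"
  proof -
    have h: "real M + 2 > 0" "real M + 3 > 0" by linarith+
    have l: "aa (M+2) / real (M+2) + (aa (M+3) - aa (M+2)) / (real M + 2) = aa (M+3) / (real M + 2)"
      by (simp add: diff_divide_distrib add.commute)
    have r: "aa (M+3) / ((real M + 2) * (real M + 3)) + aa (M+3) / (real M + 3) = aa (M+3) / (real M + 2)"
      using h by (simp add: divide_simps) (simp add: algebra_simps)
    show ?thesis using l r by (simp only: add.assoc)
  qed
  also have "\<dots> = (\<Sum>m<Suc M. harm (alpha (m + 2 + 1) - 1) / (real (m + 2) ^ 2 + real (m + 2))) + aa (Suc M+2) / real (Suc M+2)"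
  proof -
    have e1: "aa (Suc M + 2) / real (Suc M + 2) = aa (M+3) / (real M + 3)"
      by (simp add: numeral_3_eq_3 add.commute)
    show ?thesis by (simp only: S_def sum.lessThan_Suc c_eq e1)
  qed
  finally show ?case .
qed

lemma e_sums: "(\<lambda>j. 2 / ((real j + 2) * (real j + 3))) sums 1"
proof -
  have "(\<lambda>j. 2 / (real j + 2) - 2 / (real (Suc j) + 2)) sums (2 / (real 0 + 2) - 0)"
    by (rule telescope_sums') real_asymp
  moreover have "2 / (real j + 2) - 2 / (real (Suc j) + 2) = 2 / ((real j + 2) * (real j + 3))" for j
    by (simp add: field_simps)
  ultimately show ?thesis by simp
qed

lemma d_eq: "Digamma (real (alpha (j + 3))) / real (alpha (j + 3))
   = 2 * (harm (alpha (j + 2 + 1) - 1) / (real (j + 2) ^ 2 + real (j + 2))) - euler_mascheroni * (2 / ((real j + 2) * (real j + 3)))"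
proof -
  have "Suc (alpha (j+3) - 1) = alpha (j+3)" using alpha_ge1[of "j+3"] by simp
  then have D: "Digamma (real (alpha (j + 3))) = aa (j+3) - euler_mascheroni"
    using Digamma_of_nat[of "alpha (j+3) - 1", where 'a=real] unfolding aa_def by simp
  have R: "real (alpha (j + 3)) = (real j + 3) * (real j + 2) / 2"
    unfolding alpha_real by simp
  show ?thesis unfolding D unfolding R c_eq
    apply (simp add: field_simps)
    apply (simp add: diff_divide_distrib)
    done
qed

theorem mainTheorem4:
  shows "summable (\<lambda>m. A_term (m + 2)) \<and>
    summable (\<lambda>m. (harm (alpha (m + 2 + 1) - 1) :: real) / (real (m + 2) ^ 2 + real (m + 2))) \<and>
    summable (\<lambda>j. Digamma (real (alpha (j + 3))) / real (alpha (j + 3))) \<and>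
    calA = (\<Sum>m. (harm (alpha (m + 2 + 1) - 1) :: real) / (real (m + 2) ^ 2 + real (m + 2))) \<and>
    calA = euler_mascheroni / 2 + (1 / 2) * (\<Sum>j. Digamma (real (alpha (j + 3))) / real (alpha (j + 3)))"
proof -
  define c where "c = (\<lambda>m. (harm (alpha (m + 2 + 1) - 1) :: real) / (real (m + 2) ^ 2 + real (m + 2)))"
  define C where "C = suminf c"
  have cs: "c sums C" unfolding C_def c_def using c_summ by (rule summable_sums)
  have "(\<lambda>M. (\<Sum>m<M. c m) + aa (M+2) / real (M+2)) \<longlonglongrightarrow> C + 0"
    using cs aa_lim unfolding sums_def by (intro tendsto_add)
  then have As: "(\<lambda>m. A_term (m + 2)) sums C"
    unfolding sums_def partial c_def by simp
  have ds: "(\<lambda>j. Digamma (real (alpha (j + 3))) / real (alpha (j + 3))) sums (2 * C - euler_mascheroni * 1)"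
    unfolding d_eq using sums_diff[OF sums_mult[OF cs, of 2] sums_mult[OF e_sums, of euler_mascheroni]]
    unfolding c_def by simp
  show ?thesis
    using sums_summable[OF As] sums_summable[OF cs] sums_summable[OF ds]
      sums_unique[OF As] sums_unique[OF cs] sums_unique[OF ds]
    unfolding calA_def c_def by simp
qed

end
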